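(* Consider the control system $\dot x=f(x)+g(x)u$ described in the context, and suppose Assumptions A1 and A2 hold. Then the domain of null-controllability with safety constraint $\mathcal{D}$ is an open and connected subset of $\mathbb{R}^n$.
   Context: System: $\dot x = f(x)+g(x)u$, $x\in\mathbb{R}^n$, $u\in\mathbb{R}^m$, where $f:\mathbb{R}^n\to\mathbb{R}^n$ and $g:\mathbb{R}^n\to\mathbb{R}^{n\times m}$ are locally Lipschitz and $f(0)=0$. Admissible controls are $\mathcal{U}=L^\infty([0,\infty);\mathbb{R}^m)$; $\phi(t;x,u)$ denotes the unique solution with $\phi(0;x,u)=x$ under $u\in\mathcal{U}$, and it is assumed to exist for all $t\ge 0$. $\mathbb{B}(x;r)$ is the closed Euclidean ball of radius $r$ about $x$, and $\|x\|_A=\inf_{y\in A}\|x-y\|$. An obstacle set $U\subseteq\mathbb{R}^n$ is given and $S:=\mathbb{R}^n\setminus U$. Definitions: $\mathcal{D}_0=\{x:\exists u\in\mathcal{U},\ \lim_{t\to\infty}\|\phi(t;x,u)\|=0\}$; $\mathcal{D}=\{x:\exists u\in\mathcal{U},\ \lim_{t\to\infty}\|\phi(t;x,u)\|=0 \text{ and } \phi(t;x,u)\notin U\ \forall t\ge0\}$. Assumption A1 (local stabilizability): there exist $r>0$, $k>0$ and $\beta\in\mathcal{KL}$ such that for every $x\in\mathbb{B}(0;r)$ there is $u\in\mathcal{U}$ with $\|u\|_\infty\le k$ and $\|\phi(t;x,u)\|\le\beta(\|x\|,t)$ for all $t\ge0$. Assumption A2: (i) $S=\{x\in\mathbb{R}^n: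 h(x)<1\}$ for some locally Lipschitz $h:\mathbb{R}^n\to\mathbb{R}$; (ii) $S$ is open and connected; (iii) $\mathbb{B}(0;r)\subseteq S\subseteq\mathcal{D}_0$, with $r$ from Assumption A1. *)

theory Defs
  imports "HOL-Analysis.Analysis"
begin

text \<open>State space R^n is modelled as real^'n, input space R^m as real^'m,
  and n-by-m matrices as real^'m^'n (acting by *v).\<close>

definition loc_lipschitz :: "('a::metric_space \<Rightarrow> 'b::metric_space) \<Rightarrow> bool" where
  "loc_lipschitz F \<longleftrightarrow> (\<forall>x. \<exists>e>0. \<exists>L. L-lipschitz_on (cball x e) F)"

text \<open>Admissible controls: (representatives of) elements of L^infinity([0,inf); R^m).\<close>
definition admissible :: "(real \<Rightarrow> real^'m) set" where
  "admissible = {u. u \<in> borel_measurable (lebesgue_on {0..}) \<and>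
                    (\<exists>B. AE t in lebesgue_on {0..}. norm (u t) \<le> B)}"

definition ess_bounded_by :: "(real \<Rightarrow> real^'m) \<Rightarrow> real \<Rightarrow> bool" where
  "ess_bounded_by u k \<longleftrightarrow> (AE t in lebesgue_on {0..}. norm (u t) \<le> k)"

definition is_solution ::
  "(real^'n \<Rightarrow> real^'n) \<Rightarrow> (real^'n \<Rightarrow> real^'m^'n) \<Rightarrow> real^'n \<Rightarrow> (real \<Rightarrow> real^'m)
     \<Rightarrow> (real \<Rightarrow> real^'n) \<Rightarrow> bool" where
  "is_solution f g x0 u y \<longleftrightarrow>
     continuous_on {0..} y \<and>
     (\<forall>t\<ge>0. ((\<lambda>s. f (y s) + g (y s) *v u s) has_integral (y t - x0)) {0..t})"

definition class_K :: "(real \<Rightarrow> real) \<Rightarrow> bool" where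
  "class_K a \<longleftrightarrow> continuous_on {0..} a \<and> strict_mono_on {0..} a \<and> a 0 = 0"

definition class_KL :: "(real \<Rightarrow> real \<Rightarrow> real) \<Rightarrow> bool" where
  "class_KL \<beta> \<longleftrightarrow>
     continuous_on ({0..} \<times> {0..}) (\<lambda>(s,t). \<beta> s t) \<and>
     (\<forall>t\<ge>0. class_K (\<lambda>s. \<beta> s t)) \<and>
     (\<forall>s\<ge>0. antimono_on {0..} (\<lambda>t. \<beta> s t) \<and> ((\<lambda>t. \<beta> s t) \<longlongrightarrow> 0) at_top)"

definition null_ctrl_domain ::
  "(real^'n \<Rightarrow> real^'n) \<Rightarrow> (real^'n \<Rightarrow> real^'m^'n) \<Rightarrow> (real^'n) set" where
  "null_ctrl_domain f g = {x. \<exists>u\<in>(admissible :: (real \<Rightarrow> real^'m) set). \<exists>y.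
        is_solution f g x u y \<and> (y \<longlongrightarrow> 0) at_top}"

definition safe_null_ctrl_domain ::
  "(real^'n \<Rightarrow> real^'n) \<Rightarrow> (real^'n \<Rightarrow> real^'m^'n) \<Rightarrow> (real^'n) set \<Rightarrow> (real^'n) set" where
  "safe_null_ctrl_domain f g U = {x. \<exists>u\<in>(admissible :: (real \<Rightarrow> real^'m) set). \<exists>y.
        is_solution f g x u y \<and> (y \<longlongrightarrow> 0) at_top \<and> (\<forall>t\<ge>0. y t \<notin> U)}"

end

theory Submission
  imports Defs
begin



lemma uniform_cball:
  fixes Y :: "'a::metric_space set"
  assumes "compact Y" and ex: "\<And>p. p \<in> Y \<Longrightarrow> \<exists>e>0. \<exists>L. Q L (cball p e)"
   and mono: "\<And>L L' A B. Q L A \<Longrightarrow> L \<le> (L'::real) \<Longrightarrow> B \<subseteq> A \<Longrightarrow> Q L' B"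
  shows "\<exists>d>0. \<exists>L. \<forall>q\<in>Y. Q L (cball q d)"
proof -
  have "\<forall>p\<in>Y. \<exists>eL. fst eL > 0 \<and> Q (snd eL) (cball p (fst eL))" using ex by fastforce
  then have "\<exists>F. \<forall>p\<in>Y. fst (F p) > 0 \<and> Q (snd (F p)) (cball p (fst (F p)))"
    by (rule bchoice)
  then obtain F where F: "\<forall>p\<in>Y. fst (F p) > 0 \<and> Q (snd (F p)) (cball p (fst (F p)))"
    by blast
  define e where "e p = fst (F p)" for p
  define L where "L p = snd (F p)" for p
  have eL: "\<And>p. p \<in> Y \<Longrightarrow> e p > 0 \<and> Q (L p) (cball p (e p))"
    using F unfolding e_def L_def by blast
  have "Y \<subseteq> (\<Union>p\<in>Y. ball p (e p / 2))"
  proof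
    fix q assume "q \<in> Y" then have "q \<in> ball q (e q / 2)" using eL by simp
    then show "q \<in> (\<Union>p\<in>Y. ball p (e p / 2))" using \<open>q \<in> Y\<close> by blast
  qed
  then obtain C where C: "C \<subseteq> Y" "finite C" "Y \<subseteq> (\<Union>p\<in>C. ball p (e p / 2))"
    using compactE_image[OF assms(1), of Y "\<lambda>p. ball p (e p / 2)"] by auto
  show ?thesis
  proof (cases "C = {}")
    case True
    then show ?thesis using C by (intro exI[of _ 1]) auto
  next
    case False
    define d where "d = Min ((\<lambda>p. e p / 2) ` C)"
    define L0 where "L0 = Max (L ` C)"
    have dpos: "d > 0" unfolding d_def using C False eL by (subst Min_gr_iff) auto
    have "Q L0 (cball q d)" if "q \<in> Y" for q
    proof -
      have "q \<in> (\<Union>p\<in>C. ball p (e p / 2))" using C that by blast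
      then obtain p where p: "p \<in> C" "dist p q < e p / 2" by auto
      have "d \<le> e p / 2" unfolding d_def using p C by (intro Min_le) auto
      have "cball q d \<subseteq> cball p (e p)"
      proof
        fix z assume "z \<in> cball q d"
        then have "dist q z \<le> d" by simp
        with p \<open>d \<le> e p / 2\<close> dist_triangle[of p z q] show "z \<in> cball p (e p)" by simp
      qed
      moreover have "L p \<le> L0" unfolding L0_def using p C by (intro Max_ge) auto
      moreover have "p \<in> Y" using p C by blast
      then have "Q (L p) (cball p (e p))" using eL by blast
      ultimately show ?thesis using mono by blast
    qed
    then show ?thesis using dpos by blast
  qed
qed

lemma norm_mat_vec:
  fixes A :: "real^'m^'n"
  shows "norm (A *v x) \<le> real CARD('n) * real CARD('m) * norm A * norm x"
proof -
  have "\<bar>A $ i $ j\<bar> \<le> norm A" for i j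
  proof -
    have "\<bar>A $ i $ j\<bar> \<le> norm (A $ i)" by (rule component_le_norm_cart)
    also have "\<dots> \<le> norm A" by (rule Finite_Cartesian_Product.norm_nth_le)
    finally show ?thesis .
  qed
  then have "onorm ((*v) A) \<le> real CARD('n) * real CARD('m) * norm A"
    by (rule onorm_le_matrix_component)
  moreover have "norm (A *v x) \<le> onorm ((*v) A) * norm x"
    by (rule onorm) (simp add: matrix_vector_mul_bounded_linear)
  ultimately show ?thesis by (meson mult_right_mono norm_ge_zero order_trans)
qed


lemma gronwall:
  fixes e :: "real \<Rightarrow> real"
  assumes cont: "continuous_on {0..a} e" and C: "C \<ge> 0"
    and le: "\<And>t. t \<in> {0..a} \<Longrightarrow> e t \<le> c + C * integral {0..t} e"
    and t: "t \<in> {0..a}"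
  shows "e t \<le> c * exp (C * t)"
proof -
  define \<phi> where "\<phi> t = integral {0..t} e" for t
  define w where "w t = (c + C * \<phi> t) * exp (-(C*t))" for t
  have phic: "continuous_on {0..a} \<phi>" unfolding \<phi>_def
    by (rule indefinite_integral_continuous_1[OF integrable_continuous_interval[OF cont]])
  have wc: "continuous_on {0..t} w" unfolding w_def
    using t by (intro continuous_intros continuous_on_subset[OF phic]) auto
  have "\<exists>y. (w has_real_derivative y) (at x) \<and> y \<le> 0" if x: "0 < x" "x < t" for x
  proof -
    from x have xa: "x \<in> {0..a}" "0 < x" "x < a" using t by auto
    have d\<phi>: "(\<phi> has_real_derivative e x) (at x)"
      using integral_has_real_derivative[OF cont, of x] xa at_within_Icc_at[of 0 x a]
      unfolding \<phi>_def by simp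
    have "(w has_real_derivative
            (C * e x) * exp (-(C*x)) + (c + C * \<phi> x) * (exp (-(C*x)) * (-C))) (at x)"
      unfolding w_def
      by (rule derivative_eq_intros d\<phi> refl | simp)+
    moreover have "(C * e x) * exp (-(C*x)) + (c + C * \<phi> x) * (exp (-(C*x)) * (-C)) \<le> 0"
    proof -
      have "C * e x \<le> C * (c + C * \<phi> x)" using le[OF xa(1)] C unfolding \<phi>_def
        by (simp add: mult_left_mono)
      then have "(C * e x) * exp (-(C*x)) \<le> C * (c + C * \<phi> x) * exp (-(C*x))"
        by (simp add: mult_right_mono)
      then show ?thesis by (simp add: algebra_simps)
    qed
    ultimately show "\<exists>y. (w has_real_derivative y) (at x) \<and> y \<le> 0" by blast
  qed
  then have "w 0 \<ge> w t" using DERIV_nonpos_imp_decreasing_open[of 0 t w] wc t by auto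
  moreover have "w 0 = c" unfolding w_def \<phi>_def by simp
  ultimately have "(c + C * \<phi> t) * exp (-(C*t)) \<le> c" unfolding w_def by auto
  then have "(c + C * \<phi> t) \<le> c * exp (C * t)"
    by (simp add: exp_minus field_simps)
  then show ?thesis using le[OF t] unfolding \<phi>_def by simp
qed


lemma adm_I:
  assumes "u \<in> borel_measurable (lebesgue_on {0..})" "\<And>s. norm (u s) \<le> B"
  shows "u \<in> admissible"
  unfolding admissible_def using assms by (auto intro!: exI[of _ B])

lemma normalize_control:
  assumes "u \<in> admissible"
  shows "\<exists>u1 B. u1 \<in> borel_measurable (lebesgue_on {0..}) \<and> (\<forall>s. norm (u1 s) \<le> B) \<and>
           (\<forall>x y. is_solution f g x u y \<longrightarrow> is_solution f g x u1 y)"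
proof -
  obtain B where um[measurable]: "u \<in> borel_measurable (lebesgue_on {0..})"
    and B: "AE t in lebesgue_on {0..}. norm (u t) \<le> B"
    using assms unfolding admissible_def by auto
  define u1 where "u1 s = (if norm (u s) \<le> B then u s else 0)" for s
  have m: "u1 \<in> borel_measurable (lebesgue_on {0..})" unfolding u1_def by measurable
  have bd: "\<forall>s. norm (u1 s) \<le> max B 0" unfolding u1_def by auto
  have "AE t in lebesgue. t \<in> {0..} \<longrightarrow> norm (u t) \<le> B"
    using B by (subst (asm) AE_restrict_space_iff) auto
  then obtain N where N0: "{t \<in> space lebesgue. \<not> (t \<in> {0..} \<longrightarrow> norm (u t) \<le> B)} \<subseteq> N"
     "emeasure lebesgue N = 0" "N \<in> sets lebesgue"
    by (rule AE_E)
  then have "N \<in> null_sets lebesgue" by (simp add: null_setsI)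
  with N0 have N: "{t. \<not> (t \<in> {0..} \<longrightarrow> norm (u t) \<le> B)} \<subseteq> N" "N \<in> null_sets lebesgue" by auto
  have negN: "negligible N" using N(2) by (simp add: negligible_iff_null_sets)
  have "is_solution f g x u1 y" if "is_solution f g x u y" for x y
    unfolding is_solution_def
  proof (intro conjI allI impI)
    show "continuous_on {0..} y" using that unfolding is_solution_def by auto
    fix t :: real assume "t \<ge> 0"
    then have h: "((\<lambda>s. f (y s) + g (y s) *v u s) has_integral (y t - x)) {0..t}"
      using that unfolding is_solution_def by auto
    show "((\<lambda>s. f (y s) + g (y s) *v u1 s) has_integral (y t - x)) {0..t}"
    proof (rule has_integral_spike[OF negN _ h])
      fix s assume "s \<in> {0..t} - N"
      then show "f (y s) + g (y s) *v u1 s = f (y s) + g (y s) *v u s"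
        using N(1) unfolding u1_def by auto
    qed
  qed
  then show ?thesis using m bd by blast
qed

lemma shift_measurable:
  fixes u :: "real \<Rightarrow> real^'m"
  assumes "u \<in> borel_measurable (lebesgue_on {0..})" "c \<ge> 0"
  shows "(\<lambda>s. u (c + s)) \<in> borel_measurable (lebesgue_on {0..})"
proof -
  define ub where "ub x = (if x \<in> {0..} then u x else 0)" for x
  have "ub \<in> borel_measurable lebesgue" unfolding ub_def
    by (rule borel_measurable_if_I[OF assms(1)]) auto
  then have "(\<lambda>x. ub (c + 1 *\<^sub>R x)) \<in> borel_measurable lebesgue"
    by (rule borel_measurable_affine) simp
  then have "(\<lambda>x. ub (c + 1 *\<^sub>R x)) \<in> borel_measurable (lebesgue_on {0..})"
    by (rule measurable_restrict_space1)
  then show ?thesis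
    by (rule measurable_cong[THEN iffD1, rotated]) (use assms(2) in \<open>auto simp: ub_def\<close>)
qed

lemma concat_measurable:
  fixes u v :: "real \<Rightarrow> real^'m"
  assumes "u \<in> borel_measurable (lebesgue_on {0..})" "v \<in> borel_measurable (lebesgue_on {0..})" "T \<ge> 0"
  shows "(\<lambda>s. if s \<le> T then u s else v (s - T)) \<in> borel_measurable (lebesgue_on {0..})"
proof -
  define vb where "vb x = (if x \<in> {0..} then v x else 0)" for x
  have "vb \<in> borel_measurable lebesgue" unfolding vb_def
    by (rule borel_measurable_if_I[OF assms(2)]) auto
  then have "(\<lambda>x. vb (-T + 1 *\<^sub>R x)) \<in> borel_measurable lebesgue"
    by (rule borel_measurable_affine) simp
  then have vm: "(\<lambda>x. vb (-T + 1 *\<^sub>R x)) \<in> borel_measurable (lebesgue_on {0..})"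
    by (rule measurable_restrict_space1)
  have "(\<lambda>s. if s \<in> {..T} then u s else vb (-T + 1 *\<^sub>R s)) \<in> borel_measurable (lebesgue_on {0..})"
    by (rule measurable_If_set[OF assms(1) vm]) (auto simp: sets_restrict_space_iff)
  then show ?thesis
    by (rule measurable_cong[THEN iffD1, rotated]) (auto simp: vb_def)
qed

lemma shift_solution:
  assumes sol: "is_solution f g x u y" and c: "c \<ge> 0"
  shows "is_solution f g (y c) (\<lambda>s. u (c + s)) (\<lambda>s. y (c + s))"
  unfolding is_solution_def
proof (intro conjI allI impI)
  have yc: "continuous_on {0..} y" using sol unfolding is_solution_def by auto
  show "continuous_on {0..} (\<lambda>s. y (c + s))"
    by (rule continuous_on_compose2[OF yc]) (use c in \<open>auto intro!: continuous_intros\<close>)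
  fix t :: real assume t: "t \<ge> 0"
  define F where "F s = f (y s) + g (y s) *v u s" for s
  have h1: "(F has_integral (y (c + t) - x)) {0..c + t}"
    using sol t c unfolding is_solution_def F_def by auto
  have h2: "(F has_integral (y c - x)) {0..c}"
    using sol t c unfolding is_solution_def F_def by auto
  have "F integrable_on {c..c+t}"
    using integrable_subinterval_real[OF has_integral_integrable[OF h1], of c "c+t"] c t by auto
  then obtain j where j: "(F has_integral j) {c..c+t}" by blast
  have "(F has_integral (y c - x) + j) {0..c+t}"
    by (rule has_integral_combine[OF _ _ h2 j]) (use c t in auto)
  then have "(y c - x) + j = y (c + t) - x" using h1 has_integral_unique by blast
  then have "j = y (c + t) - y c" by (simp add: algebra_simps)
  with j have "(F has_integral y (c + t) - y c) {0 + c..t + c}" by (simp add: add.commute)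
  then have "((F \<circ> (+) c) has_integral y (c + t) - y c) {0..t}"
    by (subst has_integral_shift_Icc_real) 
  then show "((\<lambda>s. f (y (c + s)) + g (y (c + s)) *v u (c + s)) has_integral y (c + t) - y c) {0..t}"
    by (simp add: F_def o_def)
qed

lemma sol0:
  assumes "is_solution f g x u y" shows "y 0 = x"
proof -
  have a: "((\<lambda>s. f (y s) + g (y s) *v u s) has_integral (y 0 - x)) {0..0}"
    using assms unfolding is_solution_def by auto
  have b: "((\<lambda>s. f (y s) + g (y s) *v u s) has_integral 0) {0..(0::real)}"
    using has_integral_refl(2)[of _ 0] by simp
  from has_integral_unique[OF a b] show ?thesis by simp
qed

lemma concat_solution:
  assumes sol1: "is_solution f g x u y" and sol2: "is_solution f g (y T) v z" and T: "T \<ge> 0"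
  shows "is_solution f g x (\<lambda>s. if s \<le> T then u s else v (s - T))
                            (\<lambda>s. if s \<le> T then y s else z (s - T))"
  unfolding is_solution_def
proof (intro conjI allI impI)
  have yc: "continuous_on {0..} y" using sol1 unfolding is_solution_def by auto
  have zc: "continuous_on {0..} z" using sol2 unfolding is_solution_def by auto
  have z0: "z 0 = y T" using sol0[OF sol2] .
  have c1: "continuous_on {0..T} (\<lambda>s. if s \<le> T then y s else z (s - T))"
    by (rule continuous_on_cong[THEN iffD1, OF refl _ continuous_on_subset[OF yc]]) auto
  have "continuous_on {T..} (\<lambda>s. z (s - T))"
    by (rule continuous_on_compose2[OF zc]) (auto intro!: continuous_intros)
  then have c2: "continuous_on {T..} (\<lambda>s. if s \<le> T then y s else z (s - T))"
    by (rule continuous_on_cong[THEN iffD1, OF refl, rotated]) (auto simp: z0)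
  have "continuous_on ({0..T} \<union> {T..}) (\<lambda>s. if s \<le> T then y s else z (s - T))"
    using continuous_on_closed_Un[OF _ _ c1 c2] by auto
  moreover have "{0..T} \<union> {T..} = {0::real..}" using T by auto
  ultimately show "continuous_on {0..} (\<lambda>s. if s \<le> T then y s else z (s - T))" by simp
  fix t :: real assume t: "t \<ge> 0"
  define F where "F s = f (y s) + g (y s) *v u s" for s
  define G where "G s = f (z s) + g (z s) *v v s" for s
  define H where "H s = f (if s \<le> T then y s else z (s - T)) +
      g (if s \<le> T then y s else z (s - T)) *v (if s \<le> T then u s else v (s - T))" for s
  show "(H has_integral (if t \<le> T then y t else z (t - T)) - x) {0..t}"
  proof (cases "t \<le> T")
    case True
    have "(F has_integral y t - x) {0..t}" using sol1 t unfolding is_solution_def F_def by auto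
    then show ?thesis using True
      by (subst has_integral_cong[of _ H F]) (auto simp: H_def F_def)
  next
    case False
    have hF: "(F has_integral y T - x) {0..T}" using sol1 T unfolding is_solution_def F_def by auto
    then have hH1: "(H has_integral y T - x) {0..T}"
      by (subst has_integral_cong[of _ H F]) (auto simp: H_def F_def)
    have "(G has_integral z (t - T) - y T) {0..t - T}" using sol2 False unfolding is_solution_def G_def by auto
    then have "(((\<lambda>s. G (s - T)) \<circ> (+) T) has_integral z (t - T) - y T) {0..t - T}"
      by (simp add: o_def)
    then have "((\<lambda>s. G (s - T)) has_integral z (t - T) - y T) {0 + T..t - T + T}"
      by (subst (asm) has_integral_shift_Icc_real)
    then have hG: "((\<lambda>s. G (s - T)) has_integral z (t - T) - y T) {T..t}" by simp
    have hH2: "(H has_integral z (t - T) - y T) {T..t}"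
    proof (rule has_integral_spike_finite[OF _ _ hG])
      show "finite {T}" by simp
      fix s assume "s \<in> {T..t} - {T}"
      then show "H s = G (s - T)" by (auto simp: H_def G_def)
    qed
    have "(H has_integral (y T - x) + (z (t - T) - y T)) {0..t}"
      by (rule has_integral_combine[OF _ _ hH1 hH2]) (use T False in auto)
    then show ?thesis using False by simp
  qed
qed




theorem mainTheorem1:
  fixes f :: "real^'n \<Rightarrow> real^'n" and g :: "real^'n \<Rightarrow> real^'m^'n"
    and U :: "(real^'n) set" and h :: "real^'n \<Rightarrow> real"
    and r k :: real and \<beta> :: "real \<Rightarrow> real \<Rightarrow> real"
  assumes f_lip: "loc_lipschitz f" and g_lip: "loc_lipschitz g" and f0: "f 0 = 0"
    and exist: "\<And>x u. u \<in> admissible \<Longrightarrow> \<exists>y. is_solution f g x u y"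
    and unique: "\<And>x u y1 y2 t. u \<in> admissible \<Longrightarrow> is_solution f g x u y1 \<Longrightarrow>
                    is_solution f g x u y2 \<Longrightarrow> t \<ge> 0 \<Longrightarrow> y1 t = y2 t"
    and A1: "r > 0" "k > 0" "class_KL \<beta>"
      "\<forall>x\<in>cball 0 r. \<exists>u\<in>admissible. ess_bounded_by u k \<and>
          (\<exists>y. is_solution f g x u y \<and> (\<forall>t\<ge>0. norm (y t) \<le> \<beta> (norm x) t))"
    and A2_h: "loc_lipschitz h" "- U = {x. h x < 1}"
    and A2_S: "open (- U)" "connected (- U)"
    and A2_sub: "cball 0 r \<subseteq> - U"
      "- U \<subseteq> (null_ctrl_domain f g :: (real^'n) set)"
  shows "open (safe_null_ctrl_domain f g U :: (real^'n) set) \<and>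
         connected (safe_null_ctrl_domain f g U :: (real^'n) set)"
proof -
  let ?D = "safe_null_ctrl_domain f g U :: (real^'n) set"
  note D_def = safe_null_ctrl_domain_def
  have KLc: "continuous_on {0..} (\<lambda>s. \<beta> s 0)" and KLsm: "strict_mono_on {0..} (\<lambda>s. \<beta> s 0)"
    and KL0: "\<And>t. t \<ge> 0 \<Longrightarrow> \<beta> 0 t = 0"
    and KLanti: "\<And>s. s \<ge> 0 \<Longrightarrow> antimono_on {0..} (\<lambda>t. \<beta> s t)"
    and KLlim: "\<And>s. s \<ge> 0 \<Longrightarrow> ((\<lambda>t. \<beta> s t) \<longlongrightarrow> 0) at_top"
    using A1(3) unfolding class_KL_def class_K_def by auto
  have shift_top: "filterlim (\<lambda>s. s - c) at_top at_top" for c :: real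
  proof -
    have "filterlim (\<lambda>s. -c + s) at_top (at_top :: real filter)"
      by (rule filterlim_tendsto_add_at_top[OF tendsto_const filterlim_ident])
    then show ?thesis by simp
  qed
  have shift_top2: "filterlim (\<lambda>s. c + s) at_top at_top" for c :: real
    by (rule filterlim_tendsto_add_at_top[OF tendsto_const filterlim_ident])

  have traj_in_D: "y c \<in> ?D"
    if a: "u \<in> admissible" "is_solution f g x u y" "(y \<longlongrightarrow> 0) at_top" "\<forall>t\<ge>0. y t \<notin> U" "c \<ge> 0"
    for x u y c
  proof -
    obtain u1 B where u1: "u1 \<in> borel_measurable (lebesgue_on {0..})" "\<forall>s. norm (u1 s) \<le> B"
        "\<forall>x y. is_solution f g x u y \<longrightarrow> is_solution f g x u1 y"
      using normalize_control[OF a(1), of f g] by blast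
    have adm: "(\<lambda>s. u1 (c + s)) \<in> admissible"
      by (rule adm_I[OF shift_measurable[OF u1(1) a(5)]]) (use u1(2) in auto)
    have sol: "is_solution f g (y c) (\<lambda>s. u1 (c + s)) (\<lambda>s. y (c + s))"
      using shift_solution[OF u1(3)[rule_format, OF a(2)] a(5)] .
    have lim: "((\<lambda>s. y (c + s)) \<longlongrightarrow> 0) at_top"
      by (rule filterlim_compose[OF a(3) shift_top2])
    have safe: "\<forall>t\<ge>0. y (c + t) \<notin> U" using a(4,5) by auto
    show ?thesis unfolding D_def using adm sol lim safe by blast
  qed

  have conn: "connected ?D"
  proof -
    have zeroD: "0 \<in> ?D"
    proof -
      have "(0::real^'n) \<in> cball 0 r" using A1(1) by simp
      then obtain v y0 where v: "v \<in> admissible" "is_solution f g 0 v y0"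
          "\<forall>t\<ge>0. norm (y0 t) \<le> \<beta> (norm (0::real^'n)) t"
        using A1(4) by blast
      have y00: "y0 t = 0" if "t \<ge> 0" for t
      proof -
        have "norm (y0 t) \<le> \<beta> (norm (0::real^'n)) t" using v(3) that by blast
        then have "norm (y0 t) \<le> 0" using KL0[OF that] by simp
        then show ?thesis by simp
      qed
      have "(y0 \<longlongrightarrow> 0) at_top"
      proof (rule tendsto_eventually)
        show "\<forall>\<^sub>F x in at_top. y0 x = 0"
          using eventually_ge_at_top[of "0::real"] by (rule eventually_mono) (rule y00)
      qed
      moreover have "(0::real^'n) \<in> cball 0 r" using A1(1) by simp
      then have "(0::real^'n) \<notin> U" using A2_sub(1) by blast
      then have "\<forall>t\<ge>0. y0 t \<notin> U" using y00 by simp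
      ultimately show ?thesis unfolding D_def using v by blast
    qed
    have "\<exists>C. connected C \<and> 0 \<in> C \<and> x \<in> C \<and> C \<subseteq> ?D" if xD: "x \<in> ?D" for x
    proof -
      obtain u y where u: "u \<in> admissible" "is_solution f g x u y" "(y \<longlongrightarrow> 0) at_top" "\<forall>t\<ge>0. y t \<notin> U"
        using xD unfolding D_def by blast
      have yc: "continuous_on {0..} y" using u(2) unfolding is_solution_def by auto
      have c1: "connected (y ` {0..})" by (rule connected_continuous_image[OF yc]) simp
      have cs: "y ` {0..} \<subseteq> closure (y ` {0..})" by (rule closure_subset)
      have ev: "\<forall>\<^sub>F t in at_top. y t \<in> closure (y ` {0..})"
      proof (rule eventually_mono[OF eventually_ge_at_top[of "0::real"]])
        fix t :: real assume "0 \<le> t"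
        then have "y t \<in> y ` {0..}" by simp
        then show "y t \<in> closure (y ` {0..})" using cs by (rule subsetD[rotated])
      qed
      have "(0::real^'n) \<in> closure (y ` {0..})"
        by (rule Lim_in_closed_set[OF closed_closure ev trivial_limit_at_top_linorder u(3)])
      then have sub: "insert 0 (y ` {0..}) \<subseteq> closure (y ` {0..})" using cs by (rule insert_subsetI)
      have "connected (insert 0 (y ` {0..}))"
        by (rule connected_intermediate_closure[OF c1 _ sub]) blast
      moreover have "x \<in> y ` {0..}" using sol0[OF u(2)] by (intro rev_image_eqI[of 0]) auto
      moreover have "y ` {0..} \<subseteq> ?D"
      proof
        fix p assume "p \<in> y ` {0..}"
        then obtain c where "c \<ge> 0" "p = y c" by auto
        then show "p \<in> ?D" using traj_in_D[OF u] by blast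
      qed
      ultimately have "connected (insert 0 (y ` {0..})) \<and> 0 \<in> insert 0 (y ` {0..}) \<and>
          x \<in> insert 0 (y ` {0..}) \<and> insert 0 (y ` {0..}) \<subseteq> ?D" using zeroD by simp
      then show ?thesis by blast
    qed
    then have "\<forall>x\<in>?D. \<exists>C. connected C \<and> 0 \<in> C \<and> x \<in> C \<and> C \<subseteq> ?D" by blast
    then have "\<exists>Cf. \<forall>x\<in>?D. connected (Cf x) \<and> 0 \<in> Cf x \<and> x \<in> Cf x \<and> Cf x \<subseteq> ?D"
      by (rule bchoice)
    then obtain Cf where Cf: "\<forall>x\<in>?D. connected (Cf x) \<and> 0 \<in> Cf x \<and> x \<in> Cf x \<and> Cf x \<subseteq> ?D"
      by blast
    have eq: "?D = \<Union>(Cf ` ?D)"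
    proof
      show "?D \<subseteq> \<Union>(Cf ` ?D)" using Cf by blast
      show "\<Union>(Cf ` ?D) \<subseteq> ?D" using Cf by blast
    qed
    have "connected (\<Union>(Cf ` ?D))"
    proof (rule connected_Union)
      show "\<And>s. s \<in> Cf ` ?D \<Longrightarrow> connected s" using Cf by blast
      have "0 \<in> \<Inter>(Cf ` ?D)" using Cf by blast
      then show "\<Inter>(Cf ` ?D) \<noteq> {}" by blast
    qed
    then show ?thesis using eq by simp
  qed

  have opn: "open ?D"
    unfolding open_contains_ball
  proof
    fix x assume xD: "x \<in> ?D"
    obtain u y where u: "u \<in> admissible" and sol: "is_solution f g x u y"
      and lim: "(y \<longlongrightarrow> 0) at_top" and safe: "\<forall>t\<ge>0. y t \<notin> U"
      using xD unfolding D_def by blast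
    obtain u1 B where u1m: "u1 \<in> borel_measurable (lebesgue_on {0..})" and u1b: "\<forall>s. norm (u1 s) \<le> B"
        and u1s: "\<forall>x y. is_solution f g x u y \<longrightarrow> is_solution f g x u1 y"
      using normalize_control[OF u, of f g] by blast
    have sol1: "is_solution f g x u1 y" using u1s sol by blast
    have u1adm: "u1 \<in> admissible" using adm_I[OF u1m] u1b by blast
    have B0: "B \<ge> 0" using u1b[rule_format, of 0] norm_ge_zero[of "u1 0"] by linarith
    have yc: "continuous_on {0..} y" using sol unfolding is_solution_def by auto
    obtain \<rho> where \<rho>: "0 < \<rho>" "\<rho> \<le> r" "\<beta> \<rho> 0 < r"
    proof -
      have "(0::real) \<in> {0..}" by simp
      with KLc have c0: "\<forall>\<epsilon>>0. \<exists>d>0. \<forall>x'\<in>{0..}. dist x' 0 < d \<longrightarrow> dist (\<beta> x' 0) (\<beta> 0 0) < \<epsilon>"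
        unfolding continuous_on_iff by blast
      have "\<exists>d>0. \<forall>x'\<in>{0..}. dist x' 0 < d \<longrightarrow> dist (\<beta> x' 0) (\<beta> 0 0) < r"
        using c0 A1(1) by blast
      then obtain d where d: "d > 0" "\<forall>x'\<in>{0..}. dist x' 0 < d \<longrightarrow> dist (\<beta> x' 0) (\<beta> 0 0) < r"
        by blast
      define \<rho> where "\<rho> = min (d/2) r"
      have "0 < \<rho>" "\<rho> \<le> r" using d A1(1) unfolding \<rho>_def by auto
      moreover have "dist (\<beta> \<rho> 0) (\<beta> 0 0) < r" using d \<open>0 < \<rho>\<close> unfolding \<rho>_def by auto
      then have "\<beta> \<rho> 0 < r" using KL0[of 0] by (simp add: dist_real_def)
      ultimately show ?thesis using that by blast
    qed
    have "((\<lambda>t. norm (y t)) \<longlongrightarrow> 0) at_top" using lim by (simp add: tendsto_norm_zero)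
    then have "\<forall>\<^sub>F t in at_top. norm (y t) < \<rho>/2" using \<rho>(1) by (intro order_tendstoD(2)) auto
    then obtain T0 where T0: "\<And>t. t \<ge> T0 \<Longrightarrow> norm (y t) < \<rho>/2" by (auto simp: eventually_at_top_linorder)
    define T where "T = max T0 0"
    have T: "T \<ge> 0" "norm (y T) < \<rho>/2" using T0[of T] unfolding T_def by auto
    define Y where "Y = y ` {0..T}"
    have cY: "compact Y" unfolding Y_def
      by (rule compact_continuous_image[OF continuous_on_subset[OF yc]]) auto
    define Q where "Q L A \<longleftrightarrow> A \<subseteq> -U \<and> L-lipschitz_on A f \<and> L-lipschitz_on A g" for L A
    have "\<exists>d>0. \<exists>L. \<forall>q\<in>Y. Q L (cball q d)"
    proof (rule uniform_cball[OF cY])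
      fix p assume "p \<in> Y"
      then have "p \<in> -U" using safe unfolding Y_def by auto
      then obtain e1 where e1: "e1 > 0" "cball p e1 \<subseteq> -U" using A2_S(1) open_contains_cball by blast
      obtain e2 L2 where e2: "e2 > 0" "L2-lipschitz_on (cball p e2) f"
        using f_lip unfolding loc_lipschitz_def by blast
      obtain e3 L3 where e3: "e3 > 0" "L3-lipschitz_on (cball p e3) g"
        using g_lip unfolding loc_lipschitz_def by blast
      define e where "e = min e1 (min e2 e3)"
      have "e > 0" using e1 e2 e3 unfolding e_def by auto
      have s1: "cball p e \<subseteq> cball p e1" "cball p e \<subseteq> cball p e2" "cball p e \<subseteq> cball p e3"
        unfolding e_def by (auto intro!: subset_cball)
      have "Q (max L2 L3) (cball p e)" unfolding Q_def
      proof (intro conjI)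
        show "cball p e \<subseteq> -U" using s1(1) e1(2) by (rule subset_trans)
        show "(max L2 L3)-lipschitz_on (cball p e) f"
          by (rule lipschitz_on_mono[OF e2(2) s1(2)]) simp
        show "(max L2 L3)-lipschitz_on (cball p e) g"
          by (rule lipschitz_on_mono[OF e3(2) s1(3)]) simp
      qed
      then show "\<exists>e>0. \<exists>L. Q L (cball p e)" using \<open>e > 0\<close> by blast
    next
      fix L L' :: real and A B assume "Q L A" "L \<le> L'" "B \<subseteq> A"
      then show "Q L' B" unfolding Q_def
        by (meson lipschitz_on_mono subset_trans)
    qed
    then obtain \<delta>0 L where \<delta>0: "\<delta>0 > 0" and QL: "\<And>q. q \<in> Y \<Longrightarrow> Q L (cball q \<delta>0)" by blast
    have "y 0 \<in> Y" unfolding Y_def using T by auto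
    then have L0: "L \<ge> 0" using QL unfolding Q_def by (meson lipschitz_on_nonneg)
    define \<delta> where "\<delta> = min \<delta>0 (\<rho>/2)"
    have \<delta>: "\<delta> > 0" "\<delta> \<le> \<delta>0" "\<delta> \<le> \<rho>/2" using \<delta>0 \<rho> unfolding \<delta>_def by auto
    define cn where "cn = real CARD('n) * real CARD('m)"
    have cn0: "cn \<ge> 0" unfolding cn_def by simp
    define C where "C = L + cn * L * B"
    have C0: "C \<ge> 0" unfolding C_def using L0 cn0 B0 by simp
    define \<epsilon> where "\<epsilon> = \<delta> * exp (-(C*T))"
    have \<epsilon>0: "\<epsilon> > 0" unfolding \<epsilon>_def using \<delta> by simp
    have \<epsilon>\<delta>: "\<epsilon> * exp (C * T) = \<delta>" unfolding \<epsilon>_def by (simp add: exp_minus field_simps)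
    have \<epsilon>le: "\<epsilon> \<le> \<delta>"
    proof -
      have "exp (-(C*T)) \<le> 1" using C0 T(1) by simp
      then show ?thesis unfolding \<epsilon>_def using \<delta>(1) by (simp add: mult_left_le)
    qed
    have "ball x \<epsilon> \<subseteq> ?D"
    proof
      fix x' assume "x' \<in> ball x \<epsilon>"
      then have dx: "norm (x' - x) < \<epsilon>" by (simp add: dist_norm norm_minus_commute)
      obtain z where solz: "is_solution f g x' u1 z" using exist[OF u1adm] by blast
      have zc: "continuous_on {0..} z" using solz unfolding is_solution_def by auto
      define e where "e t = norm (z t - y t)" for t
      have ec: "continuous_on {0..T} e" unfolding e_def
        by (intro continuous_intros continuous_on_subset[OF zc] continuous_on_subset[OF yc]) auto
      have e0: "e 0 = norm (x' - x)" unfolding e_def using sol0[OF solz] sol0[OF sol1] by simp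
      have key: "e t \<le> norm (x' - x) + C * integral {0..t} e"
        if t: "t \<in> {0..T}" and small: "\<forall>s\<in>{0..t}. e s \<le> \<delta>0" for t
      proof -
        define Fz where "Fz s = f (z s) + g (z s) *v u1 s" for s
        define Fy where "Fy s = f (y s) + g (y s) *v u1 s" for s
        have hz: "(Fz has_integral (z t - x')) {0..t}" using solz t unfolding is_solution_def Fz_def by auto
        have hy: "(Fy has_integral (y t - x)) {0..t}" using sol1 t unfolding is_solution_def Fy_def by auto
        have hd: "((\<lambda>s. Fz s - Fy s) has_integral (z t - x') - (y t - x)) {0..t}"
          by (rule has_integral_diff[OF hz hy])
        have ect: "continuous_on {0..t} e" using t by (intro continuous_on_subset[OF ec]) auto
        have ie: "(\<lambda>s. C * e s) integrable_on {0..t}"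
          by (rule integrable_continuous_interval) (intro continuous_intros ect)
        have bound: "norm (Fz s - Fy s) \<le> C * e s" if s: "s \<in> {0..t}" for s
        proof -
          have "y s \<in> Y" unfolding Y_def using s t by auto
          then have Qs: "Q L (cball (y s) \<delta>0)" by (rule QL)
          have zin: "z s \<in> cball (y s) \<delta>0" using small s unfolding e_def by (simp add: dist_norm norm_minus_commute)
          have yin: "y s \<in> cball (y s) \<delta>0" using \<delta>0 by simp
          have lf: "norm (f (z s) - f (y s)) \<le> L * e s"
            using lipschitz_on_normD[OF _ zin yin] Qs unfolding Q_def e_def by blast
          have lg: "norm (g (z s) - g (y s)) \<le> L * e s"
            using lipschitz_on_normD[OF _ zin yin] Qs unfolding Q_def e_def by blast
          have "norm ((g (z s) - g (y s)) *v u1 s) \<le> cn * norm (g (z s) - g (y s)) * norm (u1 s)"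
            using norm_mat_vec[of "g (z s) - g (y s)" "u1 s"] unfolding cn_def by (simp add: mult.assoc)
          also have "\<dots> \<le> cn * (L * e s) * B"
            using lg u1b cn0 L0 by (intro mult_mono mult_left_mono) (auto simp: e_def)
          finally have lg2: "norm ((g (z s) - g (y s)) *v u1 s) \<le> cn * L * B * e s" by (simp add: algebra_simps)
          have eq: "Fz s - Fy s = (f (z s) - f (y s)) + (g (z s) - g (y s)) *v u1 s"
            unfolding Fz_def Fy_def by (simp add: matrix_vector_mult_diff_rdistrib algebra_simps)
          have "norm (Fz s - Fy s) \<le> norm (f (z s) - f (y s)) + norm ((g (z s) - g (y s)) *v u1 s)"
            unfolding eq by (rule norm_triangle_ineq)
          also have "\<dots> \<le> L * e s + cn * L * B * e s" using lf lg2 by simp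
          also have "\<dots> = C * e s" unfolding C_def by (simp add: algebra_simps)
          finally show ?thesis .
        qed
        have "norm (integral {0..t} (\<lambda>s. Fz s - Fy s)) \<le> integral {0..t} (\<lambda>s. C * e s)"
          by (rule integral_norm_bound_integral[OF has_integral_integrable[OF hd] ie bound])
        moreover have "integral {0..t} (\<lambda>s. Fz s - Fy s) = (z t - x') - (y t - x)"
          using hd by (rule integral_unique)
        moreover have "integral {0..t} (\<lambda>s. C * e s) = C * integral {0..t} e"
          using integral_mult[OF integrable_continuous_interval[OF ect], of C] by simp
        ultimately have i: "norm ((z t - x') - (y t - x)) \<le> C * integral {0..t} e" by simp
        have "z t - y t = (x' - x) + ((z t - x') - (y t - x))" by simp
        then have "e t \<le> norm (x' - x) + norm ((z t - x') - (y t - x))"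
          unfolding e_def by (metis norm_triangle_ineq)
        then show ?thesis using i by simp
      qed
      have close: "\<forall>t\<in>{0..T}. e t < \<delta>"
      proof (rule ccontr)
        assume "\<not> (\<forall>t\<in>{0..T}. e t < \<delta>)"
        define A where "A = {0..T} \<inter> e -` {\<delta>..}"
        have Ane: "A \<noteq> {}" using \<open>\<not> (\<forall>t\<in>{0..T}. e t < \<delta>)\<close> unfolding A_def by force
        have Acl: "closed A" unfolding A_def
          by (rule continuous_closed_preimage[OF ec]) auto
        have Abdd: "bdd_below A" unfolding A_def by (rule bdd_belowI[of _ 0]) auto
        define t1 where "t1 = Inf A"
        have t1A: "t1 \<in> A" unfolding t1_def by (rule closed_contains_Inf[OF Ane Abdd Acl])
        then have t1: "0 \<le> t1" "t1 \<le> T" "e t1 \<ge> \<delta>" unfolding A_def by auto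
        have below: "e s < \<delta>" if "s \<in> {0..<t1}" for s
        proof (rule ccontr)
          assume "\<not> e s < \<delta>"
          then have "s \<in> A" using that t1 unfolding A_def by auto
          then have "t1 \<le> s" unfolding t1_def using Abdd by (rule cInf_lower)
          then show False using that by auto
        qed
        have "e 0 < \<delta>" using e0 dx \<epsilon>le by simp
        then have t1pos: "t1 > 0" using t1 by (cases "t1 = 0") auto
        have ect1: "continuous_on {0..t1} e" using t1 by (intro continuous_on_subset[OF ec]) auto
        have le1: "e s \<le> \<delta>" if "s \<in> {0..t1}" for s
        proof (rule continuous_le_on_closure[of "{0..<t1}" e s \<delta>])
          show "continuous_on (closure {0..<t1}) e" using ect1 t1pos by simp
          show "s \<in> closure {0..<t1}" using that t1pos by simp
          show "\<And>x. x \<in> {0..<t1} \<Longrightarrow> e x \<le> \<delta>" using below by (simp add: less_imp_le)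
        qed
        have "e t1 \<le> norm (x' - x) * exp (C * t1)"
        proof (rule gronwall[OF ect1 C0])
          fix t assume t: "t \<in> {0..t1}"
          show "e t \<le> norm (x' - x) + C * integral {0..t} e"
          proof (rule key)
            show "t \<in> {0..T}" using t t1 by auto
            show "\<forall>s\<in>{0..t}. e s \<le> \<delta>0"
            proof
              fix s assume "s \<in> {0..t}"
              then have "s \<in> {0..t1}" using t by auto
              then have "e s \<le> \<delta>" by (rule le1)
              then show "e s \<le> \<delta>0" using \<delta>(2) by linarith
            qed
          qed
        qed (use t1 in auto)
        also have "\<dots> < \<epsilon> * exp (C * t1)" using dx by simp
        also have "\<dots> \<le> \<epsilon> * exp (C * T)" using \<epsilon>0 C0 t1 by (simp add: mult_left_mono)
        also have "\<dots> = \<delta>" by (rule \<epsilon>\<delta>)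
        finally show False using t1 by simp
      qed
      have zsafe: "z t \<notin> U" if "t \<in> {0..T}" for t
      proof -
        have "y t \<in> Y" unfolding Y_def using that by auto
        then have "cball (y t) \<delta>0 \<subseteq> -U" using QL unfolding Q_def by blast
        moreover have "z t \<in> cball (y t) \<delta>0" using close that \<delta>(2) unfolding e_def
          by (force simp: dist_norm norm_minus_commute)
        ultimately show ?thesis by blast
      qed
      have zT: "norm (z T) < \<rho>"
      proof -
        have "norm (z T) \<le> norm (y T) + e T" unfolding e_def by (metis norm_triangle_sub add.commute)
        moreover have "e T < \<delta>" using close T(1) by simp
        ultimately show ?thesis using T(2) \<delta>(3) by linarith
      qed
      have "z T \<in> cball 0 r" using zT \<rho>(2) by simp
      then obtain v \<eta> where v: "v \<in> admissible" and sol\<eta>: "is_solution f g (z T) v \<eta>"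
          and \<eta>b: "\<forall>t\<ge>0. norm (\<eta> t) \<le> \<beta> (norm (z T)) t"
        using A1(4) by blast
      obtain v1 Bv where v1m: "v1 \<in> borel_measurable (lebesgue_on {0..})" and v1b: "\<forall>s. norm (v1 s) \<le> Bv"
          and v1s: "\<forall>x y. is_solution f g x v y \<longrightarrow> is_solution f g x v1 y"
        using normalize_control[OF v, of f g] by blast
      have sol\<eta>1: "is_solution f g (z T) v1 \<eta>" using v1s sol\<eta> by blast
      define u2 where "u2 s = (if s \<le> T then u1 s else v1 (s - T))" for s
      define \<zeta> where "\<zeta> s = (if s \<le> T then z s else \<eta> (s - T))" for s
      have adm2: "u2 \<in> admissible"
      proof (rule adm_I)
        show "u2 \<in> borel_measurable (lebesgue_on {0..})"
          unfolding u2_def by (rule concat_measurable[OF u1m v1m T(1)])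
        show "norm (u2 s) \<le> max B Bv" for s using u1b[rule_format, of s] v1b[rule_format, of "s - T"] unfolding u2_def by auto
      qed
      have sol2: "is_solution f g x' u2 \<zeta>"
        unfolding u2_def \<zeta>_def by (rule concat_solution[OF solz sol\<eta>1 T(1)])
      define a where "a = norm (z T)"
      have a0: "a \<ge> 0" unfolding a_def by simp
      have \<eta>b': "norm (\<eta> t) \<le> r" if "t \<ge> 0" for t
      proof -
        have "norm (\<eta> t) \<le> \<beta> a t" using \<eta>b that unfolding a_def by blast
        also have "\<dots> \<le> \<beta> a 0" using monotone_onD[OF KLanti[OF a0], of 0 t] that by simp
        also have "\<dots> < \<beta> \<rho> 0" using strict_mono_onD[OF KLsm, of a \<rho>] a0 \<rho>(1) zT unfolding a_def by simp
        also have "\<dots> < r" by (rule \<rho>(3))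
        finally show ?thesis by simp
      qed
      have safe2: "\<forall>t\<ge>0. \<zeta> t \<notin> U"
      proof (intro allI impI)
        fix t :: real assume "t \<ge> 0"
        show "\<zeta> t \<notin> U"
        proof (cases "t \<le> T")
          case True then show ?thesis unfolding \<zeta>_def using zsafe \<open>t \<ge> 0\<close> by simp
        next
          case False
          then have "\<eta> (t - T) \<in> cball 0 r" using \<eta>b'[of "t - T"] by simp
          then have "\<eta> (t - T) \<notin> U" using A2_sub(1) by blast
          then show ?thesis unfolding \<zeta>_def using False by simp
        qed
      qed
      have lim2: "(\<zeta> \<longlongrightarrow> 0) at_top"
      proof (rule Lim_null_comparison)
        show "((\<lambda>s. \<beta> a (s - T)) \<longlongrightarrow> 0) at_top"
          by (rule filterlim_compose[OF KLlim[OF a0] shift_top])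
        show "\<forall>\<^sub>F s in at_top. norm (\<zeta> s) \<le> \<beta> a (s - T)"
        proof (rule eventually_mono[OF eventually_gt_at_top[of T]])
          fix s assume "T < s"
          then show "norm (\<zeta> s) \<le> \<beta> a (s - T)" unfolding \<zeta>_def a_def using \<eta>b by simp
        qed
      qed
      show "x' \<in> ?D" unfolding D_def using adm2 sol2 lim2 safe2 by blast
    qed
    then show "\<exists>\<epsilon>>0. ball x \<epsilon> \<subseteq> ?D" using \<epsilon>0 by blast
  qed
  show ?thesis using opn conn by blast
qed

end
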